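(* Strongly $D$-continuous pseudo-orthomodular posets are precisely the complement-closed and doubly dense subsets of complete orthomodular lattices. That is: (a) every strongly $D$-continuous pseudo-orthomodular poset is isomorphic (as a poset with complementation) to a complement-closed and doubly dense subset of some complete orthomodular lattice, with the induced order and complementation; and (b) if $X$ is a complement-closed and doubly dense subset of a complete orthomodular lattice, then $X$ with the induced order and complementation is a strongly $D$-continuous pseudo-orthomodular poset.
   Context: For a poset and $M$ a subset, $U(M)$, $L(M)$ denote the sets of upper and lower bounds; $U(a,b)=U(\{a,b\})$ etc. For subsets $B,C$, $B\le C$ means $b\le c$ for all $b\in B$, $c\in C$. A poset with complementation is a bounded poset $(P,\le,{}',0,1)$ with antitone involution $'$ ($x\le y\Rightarrow y'\le x'$, $x''=x$) with $L(x,x')=\{0\}$, $U(x,x')=\{1\}$; it is pseudo-orthomodular if $L(U(L(x,y),y'),y)=L(x,y)$ for all $x,y$; it is strongly $D$-continuous if for all $B,C\subseteq P$ with $B\le C$: $\bigwedge_{\mathbf P}\{g\in P\mid g\in C\text{ or } g'\in B\}=0$ if and only if every lower bound of $C$ in $P$ is below every upper bound of $B$ in $P$. A lattice with complementation is orthomodular if $x\vee y=((x\vee y)\wedge y')\vee y$ for all $x,y$. For a poset with complementation $\mathbf Q=(Q,\le,{}',0,1)$, a subset $X\subseteq Q$ is complement-closed and doubly dense in $\mathbf Q$ if: for every $a\in Q$, $a=\bigvee_{\mathbf Q}(L(a)\cap X)=\bigwedge_{\mathbf Q}(U(a)\cap X)$; $x\in X$ implies $x'\in X$; and $0,1\in X$.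 *)

theory Defs
  imports Main
begin

text \<open>A poset with complementation is represented by a carrier set P, an order
relation le, a complementation c and constants z (bottom 0) and u (top 1).
All notions are relativised to the carrier.\<close>

definition upper :: "'a set \<Rightarrow> ('a \<Rightarrow> 'a \<Rightarrow> bool) \<Rightarrow> 'a set \<Rightarrow> 'a set" where
  "upper P le M = {x \<in> P. \<forall>m\<in>M. le m x}"

definition lower :: "'a set \<Rightarrow> ('a \<Rightarrow> 'a \<Rightarrow> bool) \<Rightarrow> 'a set \<Rightarrow> 'a set" where
  "lower P le M = {x \<in> P. \<forall>m\<in>M. le x m}"

definition is_sup :: "'a set \<Rightarrow> ('a \<Rightarrow> 'a \<Rightarrow> bool) \<Rightarrow> 'a set \<Rightarrow> 'a \<Rightarrow> bool" where
  "is_sup P le M s \<longleftrightarrow> s \<in> upper P le M \<and> (\<forall>x\<in>upper P le M. le s x)"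

definition is_inf :: "'a set \<Rightarrow> ('a \<Rightarrow> 'a \<Rightarrow> bool) \<Rightarrow> 'a set \<Rightarrow> 'a \<Rightarrow> bool" where
  "is_inf P le M s \<longleftrightarrow> s \<in> lower P le M \<and> (\<forall>x\<in>lower P le M. le x s)"

definition poset_on :: "'a set \<Rightarrow> ('a \<Rightarrow> 'a \<Rightarrow> bool) \<Rightarrow> bool" where
  "poset_on P le \<longleftrightarrow>
     (\<forall>x\<in>P. le x x) \<and>
     (\<forall>x\<in>P. \<forall>y\<in>P. le x y \<and> le y x \<longrightarrow> x = y) \<and>
     (\<forall>x\<in>P. \<forall>y\<in>P. \<forall>w\<in>P. le x y \<and> le y w \<longrightarrow> le x w)"

definition poset_with_compl ::
  "'a set \<Rightarrow> ('a \<Rightarrow> 'a \<Rightarrow> bool) \<Rightarrow> ('a \<Rightarrow> 'a) \<Rightarrow> 'a \<Rightarrow> 'a \<Rightarrow> bool" where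
  "poset_with_compl P le c z u \<longleftrightarrow>
     poset_on P le \<and> z \<in> P \<and> u \<in> P \<and> (\<forall>x\<in>P. le z x \<and> le x u) \<and>
     (\<forall>x\<in>P. c x \<in> P) \<and>
     (\<forall>x\<in>P. \<forall>y\<in>P. le x y \<longrightarrow> le (c y) (c x)) \<and>
     (\<forall>x\<in>P. c (c x) = x) \<and>
     (\<forall>x\<in>P. lower P le {x, c x} = {z} \<and> upper P le {x, c x} = {u})"

definition pseudo_orthomodular ::
  "'a set \<Rightarrow> ('a \<Rightarrow> 'a \<Rightarrow> bool) \<Rightarrow> ('a \<Rightarrow> 'a) \<Rightarrow> 'a \<Rightarrow> 'a \<Rightarrow> bool" where
  "pseudo_orthomodular P le c z u \<longleftrightarrow>
     poset_with_compl P le c z u \<and>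
     (\<forall>x\<in>P. \<forall>y\<in>P.
        lower P le (upper P le (lower P le {x, y} \<union> {c y}) \<union> {y}) = lower P le {x, y})"

definition set_le :: "('a \<Rightarrow> 'a \<Rightarrow> bool) \<Rightarrow> 'a set \<Rightarrow> 'a set \<Rightarrow> bool" where
  "set_le le B C \<longleftrightarrow> (\<forall>b\<in>B. \<forall>x\<in>C. le b x)"

definition strongly_D_continuous ::
  "'a set \<Rightarrow> ('a \<Rightarrow> 'a \<Rightarrow> bool) \<Rightarrow> ('a \<Rightarrow> 'a) \<Rightarrow> 'a \<Rightarrow> 'a \<Rightarrow> bool" where
  "strongly_D_continuous P le c z u \<longleftrightarrow>
     poset_with_compl P le c z u \<and>
     (\<forall>B C. B \<subseteq> P \<and> C \<subseteq> P \<and> set_le le B C \<longrightarrow>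
        (is_inf P le {g \<in> P. g \<in> C \<or> c g \<in> B} z \<longleftrightarrow>
         (\<forall>a\<in>lower P le C. \<forall>b\<in>upper P le B. le a b)))"

definition complete_lattice_with_compl ::
  "'a set \<Rightarrow> ('a \<Rightarrow> 'a \<Rightarrow> bool) \<Rightarrow> ('a \<Rightarrow> 'a) \<Rightarrow> 'a \<Rightarrow> 'a \<Rightarrow> bool" where
  "complete_lattice_with_compl Q le c z u \<longleftrightarrow>
     poset_with_compl Q le c z u \<and>
     (\<forall>M. M \<subseteq> Q \<longrightarrow> (\<exists>s. is_sup Q le M s) \<and> (\<exists>i. is_inf Q le M i))"

definition complete_orthomodular_lattice ::
  "'a set \<Rightarrow> ('a \<Rightarrow> 'a \<Rightarrow> bool) \<Rightarrow> ('a \<Rightarrow> 'a) \<Rightarrow> 'a \<Rightarrow> 'a \<Rightarrow> bool" where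
  "complete_orthomodular_lattice Q le c z u \<longleftrightarrow>
     complete_lattice_with_compl Q le c z u \<and>
     (\<forall>x\<in>Q. \<forall>y\<in>Q. \<forall>s m.
        is_sup Q le {x, y} s \<longrightarrow> is_inf Q le {s, c y} m \<longrightarrow> is_sup Q le {m, y} s)"

definition compl_closed_doubly_dense ::
  "'a set \<Rightarrow> ('a \<Rightarrow> 'a \<Rightarrow> bool) \<Rightarrow> ('a \<Rightarrow> 'a) \<Rightarrow> 'a \<Rightarrow> 'a \<Rightarrow> 'a set \<Rightarrow> bool" where
  "compl_closed_doubly_dense Q le c z u X \<longleftrightarrow>
     X \<subseteq> Q \<and>
     (\<forall>a\<in>Q. is_sup Q le (lower Q le {a} \<inter> X) a \<and> is_inf Q le (upper Q le {a} \<inter> X) a) \<and>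
     (\<forall>x\<in>X. c x \<in> X) \<and> z \<in> X \<and> u \<in> X"

definition compl_poset_iso ::
  "('a \<Rightarrow> 'b) \<Rightarrow> 'a set \<Rightarrow> ('a \<Rightarrow> 'a \<Rightarrow> bool) \<Rightarrow> ('a \<Rightarrow> 'a) \<Rightarrow>
   'b set \<Rightarrow> ('b \<Rightarrow> 'b \<Rightarrow> bool) \<Rightarrow> ('b \<Rightarrow> 'b) \<Rightarrow> bool" where
  "compl_poset_iso f P le c X le' c' \<longleftrightarrow>
     bij_betw f P X \<and>
     (\<forall>x\<in>P. \<forall>y\<in>P. le x y \<longleftrightarrow> le' (f x) (f y)) \<and>
     (\<forall>x\<in>P. f (c x) = c' (f x))"

end

theory Submission
  imports Defs
begin

locale sdcP =
  fixes P :: "'a set" and le c z u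
  assumes sdc: "strongly_D_continuous P le c z u"
begin

lemma pwc: "poset_with_compl P le c z u"
  using sdc unfolding strongly_D_continuous_def by blast

lemma refl: "x \<in> P \<Longrightarrow> le x x" using pwc unfolding poset_with_compl_def poset_on_def by blast
lemma antisym: "x \<in> P \<Longrightarrow> y \<in> P \<Longrightarrow> le x y \<Longrightarrow> le y x \<Longrightarrow> x = y"
  using pwc unfolding poset_with_compl_def poset_on_def by blast
lemma trans: "x \<in> P \<Longrightarrow> y \<in> P \<Longrightarrow> w \<in> P \<Longrightarrow> le x y \<Longrightarrow> le y w \<Longrightarrow> le x w"
  using pwc unfolding poset_with_compl_def poset_on_def by blast
lemma zP: "z \<in> P" and uP: "u \<in> P" using pwc unfolding poset_with_compl_def by blast+
lemma bot: "x \<in> P \<Longrightarrow> le z x" and top: "x \<in> P \<Longrightarrow> le x u"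
  using pwc unfolding poset_with_compl_def by blast+
lemma cP: "x \<in> P \<Longrightarrow> c x \<in> P" using pwc unfolding poset_with_compl_def by blast
lemma anti: "x \<in> P \<Longrightarrow> y \<in> P \<Longrightarrow> le x y \<Longrightarrow> le (c y) (c x)"
  using pwc unfolding poset_with_compl_def by blast
lemma inv: "x \<in> P \<Longrightarrow> c (c x) = x" using pwc unfolding poset_with_compl_def by blast
lemma anti_iff2: "x \<in> P \<Longrightarrow> y \<in> P \<Longrightarrow> le x (c y) \<longleftrightarrow> le y (c x)"
  by (metis anti cP inv)
lemma compl_low: "x \<in> P \<Longrightarrow> lower P le {x, c x} = {z}"
  using pwc unfolding poset_with_compl_def by blast
lemma compl_up: "x \<in> P \<Longrightarrow> upper P le {x, c x} = {u}"
  using pwc unfolding poset_with_compl_def by blast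

lemma dcont:
  assumes "B \<subseteq> P" "C \<subseteq> P" "set_le le B C" "is_inf P le {g \<in> P. g \<in> C \<or> c g \<in> B} z"
  shows "\<forall>a\<in>lower P le C. \<forall>b\<in>upper P le B. le a b"
  using sdc assms unfolding strongly_D_continuous_def by blast

abbreviation L where "L \<equiv> lower P le"
abbreviation U where "U \<equiv> upper P le"

lemma L_sub: "L A \<subseteq> P" unfolding lower_def by auto
lemma U_sub: "U A \<subseteq> P" unfolding upper_def by auto
lemma L_anti: "A \<subseteq> B \<Longrightarrow> L B \<subseteq> L A" unfolding lower_def by auto
lemma U_anti: "A \<subseteq> B \<Longrightarrow> U B \<subseteq> U A" unfolding upper_def by auto
lemma LU_ext: "A \<subseteq> P \<Longrightarrow> A \<subseteq> L (U A)" unfolding lower_def upper_def by auto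
lemma UL_ext: "A \<subseteq> P \<Longrightarrow> A \<subseteq> U (L A)" unfolding lower_def upper_def by auto
lemma LU_mono: "A \<subseteq> B \<Longrightarrow> L (U A) \<subseteq> L (U B)" by (intro L_anti U_anti)
lemma LUL: "A \<subseteq> P \<Longrightarrow> L (U (L A)) = L A"
  by (meson L_anti LU_ext L_sub UL_ext subset_antisym)

lemma cz: "c z = u"
proof -
  have "c z \<in> upper P le {z, c z}" using zP cP bot refl unfolding upper_def by auto
  then show ?thesis using compl_up[OF zP] by blast
qed

lemma Lsing_z: "L {z} = {z}"
  using zP antisym bot refl unfolding lower_def by auto
lemma Lsing_u: "L {u} = P"
  using top unfolding lower_def by auto

lemma cLc: assumes "A \<subseteq> P" shows "c ` L (c ` A) = U A"
proof
  show "c ` L (c ` A) \<subseteq> U A"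
  proof
    fix y assume "y \<in> c ` L (c ` A)"
    then obtain x where x: "x \<in> L (c ` A)" "y = c x" by blast
    have xP: "x \<in> P" using x unfolding lower_def by auto
    have "\<forall>a\<in>A. le a (c x)"
    proof
      fix a assume a: "a \<in> A"
      then have aP: "a \<in> P" using assms by blast
      have "le x (c a)" using x a unfolding lower_def by auto
      then show "le a (c x)" using anti_iff2 xP aP by blast
    qed
    then show "y \<in> U A" using x xP cP unfolding upper_def by auto
  qed
next
  show "U A \<subseteq> c ` L (c ` A)"
  proof
    fix y assume y: "y \<in> U A"
    then have yP: "y \<in> P" unfolding upper_def by auto
    have "\<forall>m\<in>c ` A. le (c y) m"
    proof
      fix m assume "m \<in> c ` A"
      then obtain a where a: "a \<in> A" "m = c a" by blast
      then have aP: "a \<in> P" using assms by blast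
      have "le a y" using y a unfolding upper_def by auto
      then show "le (c y) m" using anti aP yP a by blast
    qed
    then have "c y \<in> L (c ` A)" using cP yP unfolding lower_def by auto
    then show "y \<in> c ` L (c ` A)" using inv[OF yP] by (metis image_eqI)
  qed
qed

definition "QQ = {A. A \<subseteq> P \<and> L (U A) = A}"
definition "cQ A = L (c ` A)"
definition "ff x = L {x}"
definition "XX = ff ` P"

lemma QQ_sub: "A \<in> QQ \<Longrightarrow> A \<subseteq> P" unfolding QQ_def by auto
lemma QQ_cl: "A \<in> QQ \<Longrightarrow> L (U A) = A" unfolding QQ_def by auto

lemma Lclosed: "M \<subseteq> P \<Longrightarrow> L M \<in> QQ"
  unfolding QQ_def using LUL L_sub by auto

lemma cimg: "A \<subseteq> P \<Longrightarrow> c ` A \<subseteq> P" using cP by auto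

lemma cQ_Q: "A \<subseteq> P \<Longrightarrow> cQ A \<in> QQ" unfolding cQ_def using Lclosed cimg by blast
lemma cQ_inv: "A \<in> QQ \<Longrightarrow> cQ (cQ A) = A"
  unfolding cQ_def using cLc QQ_cl QQ_sub by (metis)
lemma cQ_anti: "A \<subseteq> B \<Longrightarrow> cQ B \<subseteq> cQ A" unfolding cQ_def by (intro L_anti image_mono)

lemma Q_lower: "A \<in> QQ \<Longrightarrow> x \<in> A \<Longrightarrow> y \<in> P \<Longrightarrow> le y x \<Longrightarrow> y \<in> A"
proof -
  assume A: "A \<in> QQ" and x: "x \<in> A" and y: "y \<in> P" "le y x"
  have xP: "x \<in> P" using A x QQ_sub by blast
  have "x \<in> L (U A)" using A x QQ_cl by blast
  then have "\<forall>w\<in>U A. le y w" using y xP trans U_sub unfolding lower_def by blast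
  then have "y \<in> L (U A)" using y unfolding lower_def by blast
  then show "y \<in> A" using A QQ_cl by blast
qed

lemma z_in: "A \<in> QQ \<Longrightarrow> z \<in> A"
proof -
  assume A: "A \<in> QQ"
  have "z \<in> L (U A)" using zP bot U_sub unfolding lower_def by blast
  then show ?thesis using A QQ_cl by blast
qed

lemma meet_compl: "A \<in> QQ \<Longrightarrow> A \<inter> cQ A \<subseteq> {z}"
proof
  fix x assume A: "A \<in> QQ" and x: "x \<in> A \<inter> cQ A"
  have xP: "x \<in> P" using A x QQ_sub by blast
  have "le x (c x)" using x unfolding cQ_def lower_def by auto
  then have "x \<in> lower P le {x, c x}" using xP refl unfolding lower_def by auto
  then show "x \<in> {z}" using compl_low[OF xP] by blast
qed

lemma Q_inter: "M \<subseteq> QQ \<Longrightarrow> P \<inter> \<Inter>M \<in> QQ"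
proof -
  assume M: "M \<subseteq> QQ"
  have "L (U (P \<inter> \<Inter>M)) \<subseteq> A" if "A \<in> M" for A
  proof -
    have "L (U (P \<inter> \<Inter>M)) \<subseteq> L (U A)" using that by (intro LU_mono) blast
    then show ?thesis using M that QQ_cl by blast
  qed
  then have "L (U (P \<inter> \<Inter>M)) \<subseteq> P \<inter> \<Inter>M" using L_sub by blast
  moreover have "P \<inter> \<Inter>M \<subseteq> L (U (P \<inter> \<Inter>M))" by (rule LU_ext) blast
  ultimately show ?thesis unfolding QQ_def by blast
qed

lemma zQ: "{z} \<in> QQ" using Lclosed[of "{z}"] zP Lsing_z by simp
lemma uQ: "P \<in> QQ" using Lclosed[of "{u}"] uP Lsing_u by simp

lemma cQ_z: "cQ {z} = P" unfolding cQ_def using cz Lsing_u by simp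

lemma low_compl: "A \<in> QQ \<Longrightarrow> lower QQ (\<subseteq>) {A, cQ A} = {{z}}"
proof -
  assume A: "A \<in> QQ"
  have Bz: "B = {z}" if "B \<in> QQ" "B \<subseteq> A" "B \<subseteq> cQ A" for B
    using meet_compl[OF A] z_in[OF that(1)] that by blast
  moreover have "{z} \<subseteq> A" "{z} \<subseteq> cQ A" using z_in[OF A] z_in[OF cQ_Q[OF QQ_sub[OF A]]] by simp_all
  ultimately show ?thesis
  proof (intro equalityI subsetI)
    fix B assume "B \<in> lower QQ (\<subseteq>) {A, cQ A}"
    then have "B \<in> QQ" "B \<subseteq> A" "B \<subseteq> cQ A" unfolding lower_def by auto
    then show "B \<in> {{z}}" using Bz by blast
  next
    fix B assume "B \<in> {{z}}"
    then have "B = {z}" by simp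
    then show "B \<in> lower QQ (\<subseteq>) {A, cQ A}" using zQ \<open>{z} \<subseteq> A\<close> \<open>{z} \<subseteq> cQ A\<close>
      unfolding lower_def by simp
  qed
qed

lemma up_compl: "A \<in> QQ \<Longrightarrow> upper QQ (\<subseteq>) {A, cQ A} = {P}"
proof -
  assume A: "A \<in> QQ"
  have BP: "B = P" if B: "B \<in> QQ" "A \<subseteq> B" "cQ A \<subseteq> B" for B
  proof -
    have cB: "cQ B \<in> QQ" using cQ_Q[OF QQ_sub[OF B(1)]] .
    have "cQ B \<subseteq> cQ A" "cQ B \<subseteq> cQ (cQ A)" using cQ_anti[OF B(2)] cQ_anti[OF B(3)] by simp_all
    then have "cQ B \<subseteq> A \<inter> cQ A" using cQ_inv[OF A] by blast
    then have "cQ B = {z}" using meet_compl[OF A] z_in[OF cB] by blast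
    then show "B = P" using cQ_inv[OF B(1)] cQ_z by simp
  qed
  moreover have "A \<subseteq> P" "cQ A \<subseteq> P" using QQ_sub[OF A] QQ_sub[OF cQ_Q[OF QQ_sub[OF A]]] by simp_all
  ultimately show ?thesis
  proof (intro equalityI subsetI)
    fix B assume "B \<in> upper QQ (\<subseteq>) {A, cQ A}"
    then have "B \<in> QQ" "A \<subseteq> B" "cQ A \<subseteq> B" unfolding upper_def by auto
    then show "B \<in> {P}" using BP by blast
  next
    fix B assume "B \<in> {P}"
    then have "B = P" by simp
    then show "B \<in> upper QQ (\<subseteq>) {A, cQ A}" using uQ \<open>A \<subseteq> P\<close> \<open>cQ A \<subseteq> P\<close>
      unfolding upper_def by simp
  qed
qed

lemma Q_sup: "M \<subseteq> QQ \<Longrightarrow> is_sup QQ (\<subseteq>) M (L (U (\<Union>M)))"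
proof -
  assume M: "M \<subseteq> QQ"
  have UP: "\<Union>M \<subseteq> P" using M QQ_sub by blast
  have inQ: "L (U (\<Union>M)) \<in> QQ" using Lclosed U_sub by blast
  have "A \<subseteq> L (U (\<Union>M))" if "A \<in> M" for A using LU_ext[OF UP] that by blast
  moreover have "L (U (\<Union>M)) \<subseteq> B" if "B \<in> QQ" "\<forall>A\<in>M. A \<subseteq> B" for B
  proof -
    have "L (U (\<Union>M)) \<subseteq> L (U B)" using that by (intro LU_mono) blast
    then show ?thesis using that QQ_cl by blast
  qed
  ultimately show ?thesis using inQ unfolding is_sup_def upper_def by blast
qed

lemma Q_inf: "M \<subseteq> QQ \<Longrightarrow> is_inf QQ (\<subseteq>) M (P \<inter> \<Inter>M)"
proof -
  assume M: "M \<subseteq> QQ"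
  have "P \<inter> \<Inter>M \<in> QQ" using Q_inter[OF M] .
  moreover have "B \<subseteq> P \<inter> \<Inter>M" if "B \<in> QQ" "\<forall>A\<in>M. B \<subseteq> A" for B
    using that QQ_sub by blast
  ultimately show ?thesis unfolding is_inf_def lower_def by blast
qed

lemma Q_clc: "complete_lattice_with_compl QQ (\<subseteq>) cQ {z} P"
proof -
  have 1: "poset_on QQ (\<subseteq>)" unfolding poset_on_def by blast
  have 2: "\<forall>x\<in>QQ. {z} \<subseteq> x \<and> x \<subseteq> P"
  proof
    fix x assume x: "x \<in> QQ"
    show "{z} \<subseteq> x \<and> x \<subseteq> P" using z_in[OF x] QQ_sub[OF x] by simp
  qed
  have 3: "\<forall>x\<in>QQ. cQ x \<in> QQ"
  proof
    fix x assume x: "x \<in> QQ"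
    show "cQ x \<in> QQ" using cQ_Q[OF QQ_sub[OF x]] .
  qed
  have 4: "\<forall>x\<in>QQ. \<forall>y\<in>QQ. x \<subseteq> y \<longrightarrow> cQ y \<subseteq> cQ x"
    using cQ_anti by (intro ballI impI)
  have 5: "\<forall>x\<in>QQ. cQ (cQ x) = x" using cQ_inv by (intro ballI)
  have 6: "\<forall>x\<in>QQ. lower QQ (\<subseteq>) {x, cQ x} = {{z}} \<and> upper QQ (\<subseteq>) {x, cQ x} = {P}"
  proof
    fix x assume x: "x \<in> QQ"
    show "lower QQ (\<subseteq>) {x, cQ x} = {{z}} \<and> upper QQ (\<subseteq>) {x, cQ x} = {P}"
      using low_compl[OF x] up_compl[OF x] by simp
  qed
  have 7: "\<forall>M. M \<subseteq> QQ \<longrightarrow> (\<exists>s. is_sup QQ (\<subseteq>) M s) \<and> (\<exists>i. is_inf QQ (\<subseteq>) M i)"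
  proof (intro allI impI conjI)
    fix M assume M: "M \<subseteq> QQ"
    show "\<exists>s. is_sup QQ (\<subseteq>) M s" using Q_sup[OF M] by (rule exI)
    show "\<exists>i. is_inf QQ (\<subseteq>) M i" using Q_inf[OF M] by (rule exI)
  qed
  show ?thesis
    unfolding complete_lattice_with_compl_def poset_with_compl_def
    using 1 2 3 4 5 6 7 zQ uQ by (intro conjI) assumption+
qed

lemma Q_oml: "complete_orthomodular_lattice QQ (\<subseteq>) cQ {z} P"
  unfolding complete_orthomodular_lattice_def
proof (intro conjI Q_clc ballI allI impI)
  fix x y s m
  assume x: "x \<in> QQ" and y: "y \<in> QQ" and s: "is_sup QQ (\<subseteq>) {x, y} s"
    and m: "is_inf QQ (\<subseteq>) {s, cQ y} m"
  have sQ: "s \<in> QQ" and ys: "y \<subseteq> s" using s unfolding is_sup_def upper_def by auto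
  have mQ: "m \<in> QQ" and ms: "m \<subseteq> s" and mcy: "m \<subseteq> cQ y"
    using m unfolding is_inf_def lower_def by auto
  have cyQ: "cQ y \<in> QQ" using y QQ_sub cQ_Q by blast
  have scy: "s \<inter> cQ y \<subseteq> m"
  proof -
    have "P \<inter> \<Inter>{s, cQ y} \<in> QQ" using Q_inter[of "{s, cQ y}"] sQ cyQ by blast
    moreover have "P \<inter> \<Inter>{s, cQ y} = s \<inter> cQ y" using sQ QQ_sub by blast
    ultimately have "s \<inter> cQ y \<in> QQ" by simp
    then show ?thesis using m unfolding is_inf_def lower_def by auto
  qed
  define t where "t = L (U (m \<union> y))"
  have myP: "m \<union> y \<subseteq> P" using mQ y QQ_sub by blast
  have tQ: "t \<in> QQ" unfolding t_def using Lclosed U_sub by blast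
  have mt: "m \<subseteq> t" and yt: "y \<subseteq> t" using LU_ext[OF myP] unfolding t_def by auto
  have ts: "t \<subseteq> s"
  proof -
    have "t \<subseteq> L (U s)" unfolding t_def using ms ys by (intro LU_mono) blast
    then show ?thesis using sQ QQ_cl by blast
  qed
  have tP: "t \<subseteq> P" using tQ QQ_sub by blast
  have setle: "set_le le t (U s)"
    unfolding set_le_def
  proof (intro ballI)
    fix b w assume b: "b \<in> t" and w: "w \<in> U s"
    have "b \<in> s" using b ts by blast
    then show "le b w" using w unfolding upper_def by auto
  qed
  have isinf: "is_inf P le {g \<in> P. g \<in> U s \<or> c g \<in> t} z"
    unfolding is_inf_def
  proof (intro conjI ballI)
    show "z \<in> lower P le {g \<in> P. g \<in> U s \<or> c g \<in> t}" using zP bot unfolding lower_def by auto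
    fix x assume x: "x \<in> lower P le {g \<in> P. g \<in> U s \<or> c g \<in> t}"
    have xP: "x \<in> P" using x unfolding lower_def by auto
    have "\<forall>w\<in>U s. le x w" using x U_sub unfolding lower_def by blast
    then have "x \<in> L (U s)" using xP unfolding lower_def by blast
    then have xs: "x \<in> s" using sQ QQ_cl by blast
    have "\<forall>w\<in>c ` t. le x w"
    proof
      fix w assume "w \<in> c ` t"
      then obtain v where v: "v \<in> t" "w = c v" by blast
      have "v \<in> P" using v tP by blast
      then have "c w \<in> t" "w \<in> P" using v inv cP by auto
      then show "le x w" using x unfolding lower_def by blast
    qed
    then have "x \<in> cQ t" using xP unfolding cQ_def lower_def by blast
    then have "x \<in> cQ y" using cQ_anti[OF yt] by blast
    then have "x \<in> m" using xs scy by blast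
    then have "x \<in> t \<inter> cQ t" using mt \<open>x \<in> cQ t\<close> by blast
    then have "x = z" using meet_compl[OF tQ] by blast
    then show "le x z" using refl zP by simp
  qed
  have "\<forall>a\<in>L (U s). \<forall>b\<in>U t. le a b" by (rule dcont[OF tP U_sub setle isinf])
  then have "L (U s) \<subseteq> L (U t)" using L_sub unfolding lower_def by blast
  then have st: "s = t" using sQ tQ QQ_cl ts by blast
  have tB: "t \<subseteq> B" if "B \<in> QQ" "m \<subseteq> B" "y \<subseteq> B" for B
  proof -
    have "t \<subseteq> L (U B)" unfolding t_def using that by (intro LU_mono) blast
    then show ?thesis using that QQ_cl by blast
  qed
  show "is_sup QQ (\<subseteq>) {m, y} s"
    unfolding is_sup_def upper_def
  proof (intro conjI ballI)
    show "s \<in> {x \<in> QQ. \<forall>a\<in>{m, y}. a \<subseteq> x}" using sQ ms ys by simp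
    fix B assume "B \<in> {x \<in> QQ. \<forall>a\<in>{m, y}. a \<subseteq> x}"
    then have "B \<in> QQ" "m \<subseteq> B" "y \<subseteq> B" by simp_all
    then show "s \<subseteq> B" using st tB by simp
  qed
qed

lemma ff_Q: "x \<in> P \<Longrightarrow> ff x \<in> QQ" unfolding ff_def by (intro Lclosed) simp
lemma ff_self: "x \<in> P \<Longrightarrow> x \<in> ff x" unfolding ff_def lower_def using refl by simp
lemma ff_mem: "w \<in> ff x \<longleftrightarrow> w \<in> P \<and> le w x" unfolding ff_def lower_def by simp
lemma ff_le:
  assumes xP: "x \<in> P" and yP: "y \<in> P"
  shows "le x y \<longleftrightarrow> ff x \<subseteq> ff y"
proof
  assume xy: "le x y"
  show "ff x \<subseteq> ff y"
  proof
    fix w assume "w \<in> ff x"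
    then have wP: "w \<in> P" and wx: "le w x" using ff_mem by simp_all
    have "le w y" using trans[OF wP xP yP wx xy] .
    then show "w \<in> ff y" using ff_mem wP by simp
  qed
next
  assume "ff x \<subseteq> ff y"
  then have "x \<in> ff y" using ff_self[OF xP] by (rule subsetD)
  then show "le x y" using ff_mem by simp
qed

lemma LU_sing: "p \<in> P \<Longrightarrow> L (U {p}) = L {p}"
proof -
  assume p: "p \<in> P"
  have "p \<in> U {p}" using p refl unfolding upper_def by auto
  then have "L (U {p}) \<subseteq> L {p}" by (intro L_anti) blast
  moreover have "L {p} \<subseteq> L (U {p})"
  proof
    fix y assume "y \<in> L {p}"
    then have yP: "y \<in> P" and yp: "le y p" unfolding lower_def by simp_all
    have "\<forall>w\<in>U {p}. le y w"
    proof
      fix w assume "w \<in> U {p}"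
      then have wP: "w \<in> P" and pw: "le p w" unfolding upper_def by simp_all
      show "le y w" using trans[OF yP p wP yp pw] .
    qed
    then show "y \<in> L (U {p})" using yP unfolding lower_def by simp
  qed
  ultimately show ?thesis by (rule subset_antisym)
qed

lemma ff_c: "x \<in> P \<Longrightarrow> ff (c x) = cQ (ff x)"
proof -
  assume x: "x \<in> P"
  have "{x} = c ` {c x}" using inv[OF x] by simp
  then have "cQ (ff x) = L (c ` L (c ` {c x}))" unfolding cQ_def ff_def by simp
  also have "\<dots> = L (U {c x})" using cLc[of "{c x}"] cP x by simp
  also have "\<dots> = ff (c x)" unfolding ff_def using LU_sing cP x by simp
  finally show ?thesis by simp
qed

lemma XX_sub: "XX \<subseteq> QQ"
proof
  fix x assume "x \<in> XX"
  then obtain p where "p \<in> P" "x = ff p" unfolding XX_def by blast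
  then show "x \<in> QQ" using ff_Q by simp
qed

lemma ffX: "p \<in> P \<Longrightarrow> ff p \<in> XX" unfolding XX_def by (rule imageI)

lemma XX_dd: "compl_closed_doubly_dense QQ (\<subseteq>) cQ {z} P XX"
  unfolding compl_closed_doubly_dense_def
proof (intro conjI ballI)
  show "XX \<subseteq> QQ" by (rule XX_sub)
  have "ff z = {z}" unfolding ff_def using Lsing_z .
  then show "{z} \<in> XX" using ffX[OF zP] by simp
  have "ff u = P" unfolding ff_def using Lsing_u .
  then show "P \<in> XX" using ffX[OF uP] by simp
  fix x assume "x \<in> XX"
  then obtain p where p: "p \<in> P" "x = ff p" unfolding XX_def by blast
  then have "cQ x = ff (c p)" using ff_c by simp
  then show "cQ x \<in> XX" using ffX[OF cP[OF p(1)]] by simp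
next
  fix a assume a: "a \<in> QQ"
  have aP: "a \<subseteq> P" using QQ_sub[OF a] .
  show "is_sup QQ (\<subseteq>) (lower QQ (\<subseteq>) {a} \<inter> XX) a"
    unfolding is_sup_def
  proof (intro conjI ballI)
    have "\<forall>m\<in>lower QQ (\<subseteq>) {a} \<inter> XX. m \<subseteq> a" unfolding lower_def by simp
    then show "a \<in> upper QQ (\<subseteq>) (lower QQ (\<subseteq>) {a} \<inter> XX)" using a unfolding upper_def by simp
    fix B assume B: "B \<in> upper QQ (\<subseteq>) (lower QQ (\<subseteq>) {a} \<inter> XX)"
    show "a \<subseteq> B"
    proof
      fix x assume x: "x \<in> a"
      have xP: "x \<in> P" using aP x by (rule subsetD)
      have "ff x \<subseteq> a"
      proof
        fix w assume "w \<in> ff x"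
        then have "w \<in> P" "le w x" using ff_mem by simp_all
        then show "w \<in> a" using Q_lower[OF a x] by simp
      qed
      then have "ff x \<in> lower QQ (\<subseteq>) {a} \<inter> XX" using ff_Q[OF xP] ffX[OF xP] unfolding lower_def by simp
      then have "ff x \<subseteq> B" using B unfolding upper_def by simp
      then show "x \<in> B" using ff_self[OF xP] by (rule subsetD)
    qed
  qed
  show "is_inf QQ (\<subseteq>) (upper QQ (\<subseteq>) {a} \<inter> XX) a"
    unfolding is_inf_def
  proof (intro conjI ballI)
    have "\<forall>m\<in>upper QQ (\<subseteq>) {a} \<inter> XX. a \<subseteq> m" unfolding upper_def by simp
    then show "a \<in> lower QQ (\<subseteq>) (upper QQ (\<subseteq>) {a} \<inter> XX)" using a unfolding lower_def by simp
    fix B assume B: "B \<in> lower QQ (\<subseteq>) (upper QQ (\<subseteq>) {a} \<inter> XX)"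
    have BQ: "B \<in> QQ" using B unfolding lower_def by simp
    show "B \<subseteq> a"
    proof
      fix y assume y: "y \<in> B"
      have yP: "y \<in> P" using QQ_sub[OF BQ] y by (rule subsetD)
      have "\<forall>w\<in>U a. le y w"
      proof
        fix w assume w: "w \<in> U a"
        have wP: "w \<in> P" using w unfolding upper_def by simp
        have "a \<subseteq> ff w"
        proof
          fix v assume v: "v \<in> a"
          have "v \<in> P" using aP v by (rule subsetD)
          moreover have "le v w" using w v unfolding upper_def by simp
          ultimately show "v \<in> ff w" using ff_mem by simp
        qed
        then have "ff w \<in> upper QQ (\<subseteq>) {a} \<inter> XX" using ff_Q[OF wP] ffX[OF wP] unfolding upper_def by simp
        then have "B \<subseteq> ff w" using B unfolding lower_def by simp
        then have "y \<in> ff w" using y by (rule subsetD)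
        then show "le y w" using ff_mem by simp
      qed
      then have "y \<in> L (U a)" using yP unfolding lower_def by simp
      then show "y \<in> a" using QQ_cl[OF a] by simp
    qed
  qed
qed

lemma ff_iso: "compl_poset_iso ff P le c XX (\<subseteq>) cQ"
  unfolding compl_poset_iso_def
proof (intro conjI ballI)
  have "inj_on ff P"
  proof (rule inj_onI)
    fix x y assume x: "x \<in> P" and y: "y \<in> P" and e: "ff x = ff y"
    have "le x y" using ff_le[OF x y] e by simp
    moreover have "le y x" using ff_le[OF y x] e by simp
    ultimately show "x = y" using antisym[OF x y] by simp
  qed
  then show "bij_betw ff P XX" unfolding bij_betw_def XX_def by simp
  show "le x y \<longleftrightarrow> ff x \<subseteq> ff y" if "x \<in> P" "y \<in> P" for x y using ff_le[OF that] .
  show "ff (c x) = cQ (ff x)" if "x \<in> P" for x using ff_c[OF that] .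
qed

end

locale omlQ =
  fixes Q :: "'b set" and le c z u X
  assumes oml: "complete_orthomodular_lattice Q le c z u"
    and dd: "compl_closed_doubly_dense Q le c z u X"
begin

lemma pwc: "poset_with_compl Q le c z u"
  using oml unfolding complete_orthomodular_lattice_def complete_lattice_with_compl_def by blast

lemma refl: "x \<in> Q \<Longrightarrow> le x x" using pwc unfolding poset_with_compl_def poset_on_def by blast
lemma antisym: "x \<in> Q \<Longrightarrow> y \<in> Q \<Longrightarrow> le x y \<Longrightarrow> le y x \<Longrightarrow> x = y"
  using pwc unfolding poset_with_compl_def poset_on_def by blast
lemma trans: "x \<in> Q \<Longrightarrow> y \<in> Q \<Longrightarrow> w \<in> Q \<Longrightarrow> le x y \<Longrightarrow> le y w \<Longrightarrow> le x w"
  using pwc unfolding poset_with_compl_def poset_on_def by blast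
lemma zQ: "z \<in> Q" and uQ: "u \<in> Q" using pwc unfolding poset_with_compl_def by blast+
lemma bot: "x \<in> Q \<Longrightarrow> le z x" and top: "x \<in> Q \<Longrightarrow> le x u"
  using pwc unfolding poset_with_compl_def by blast+
lemma cQ: "x \<in> Q \<Longrightarrow> c x \<in> Q" using pwc unfolding poset_with_compl_def by blast
lemma anti: "x \<in> Q \<Longrightarrow> y \<in> Q \<Longrightarrow> le x y \<Longrightarrow> le (c y) (c x)"
  using pwc unfolding poset_with_compl_def by blast
lemma inv: "x \<in> Q \<Longrightarrow> c (c x) = x" using pwc unfolding poset_with_compl_def by blast
lemma anti_iff: "x \<in> Q \<Longrightarrow> y \<in> Q \<Longrightarrow> le x y \<longleftrightarrow> le (c y) (c x)"
  by (metis anti cQ inv)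
lemma anti_iff2: "x \<in> Q \<Longrightarrow> y \<in> Q \<Longrightarrow> le x (c y) \<longleftrightarrow> le y (c x)"
  by (metis anti cQ inv)
lemma compl_low: "x \<in> Q \<Longrightarrow> lower Q le {x, c x} = {z}"
  and compl_up: "x \<in> Q \<Longrightarrow> upper Q le {x, c x} = {u}"
  using pwc unfolding poset_with_compl_def by blast+
lemma ex_sup: "M \<subseteq> Q \<Longrightarrow> \<exists>s. is_sup Q le M s"
  and ex_inf: "M \<subseteq> Q \<Longrightarrow> \<exists>s. is_inf Q le M s"
  using oml unfolding complete_orthomodular_lattice_def complete_lattice_with_compl_def by blast+
lemma omlaw: "x \<in> Q \<Longrightarrow> y \<in> Q \<Longrightarrow> is_sup Q le {x,y} s \<Longrightarrow> is_inf Q le {s, c y} m \<Longrightarrow> is_sup Q le {m,y} s"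
  using oml unfolding complete_orthomodular_lattice_def by blast
lemma XQ: "X \<subseteq> Q" using dd unfolding compl_closed_doubly_dense_def by blast
lemma cX: "x \<in> X \<Longrightarrow> c x \<in> X" and zX: "z \<in> X" and uX: "u \<in> X"
  using dd unfolding compl_closed_doubly_dense_def by blast+
lemma dsup: "a \<in> Q \<Longrightarrow> is_sup Q le (lower Q le {a} \<inter> X) a"
  and dinf: "a \<in> Q \<Longrightarrow> is_inf Q le (upper Q le {a} \<inter> X) a"
  using dd unfolding compl_closed_doubly_dense_def by blast+

lemma dense_le:
  assumes "w \<in> Q" "v \<in> Q" "\<And>x. x \<in> X \<Longrightarrow> le x w \<Longrightarrow> le x v" shows "le w v"
proof -
  have "v \<in> upper Q le (lower Q le {w} \<inter> X)"
    using assms unfolding upper_def lower_def by auto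
  then show ?thesis using dsup[OF assms(1)] unfolding is_sup_def by blast
qed

lemma dense_ge:
  assumes "w \<in> Q" "v \<in> Q" "\<And>x. x \<in> X \<Longrightarrow> le w x \<Longrightarrow> le v x" shows "le v w"
proof -
  have "v \<in> lower Q le (upper Q le {w} \<inter> X)"
    using assms unfolding upper_def lower_def by auto
  then show ?thesis using dinf[OF assms(1)] unfolding is_inf_def by blast
qed

lemma sup_props: "is_sup Q le M s \<Longrightarrow> s \<in> Q \<and> (\<forall>m\<in>M. le m s) \<and> (\<forall>x\<in>Q. (\<forall>m\<in>M. le m x) \<longrightarrow> le s x)"
  unfolding is_sup_def upper_def by auto
lemma inf_props: "is_inf Q le M s \<Longrightarrow> s \<in> Q \<and> (\<forall>m\<in>M. le s m) \<and> (\<forall>x\<in>Q. (\<forall>m\<in>M. le x m) \<longrightarrow> le x s)"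
  unfolding is_inf_def lower_def by auto

lemma lowX: "lower X le M = lower Q le M \<inter> X" using XQ unfolding lower_def by auto
lemma upX: "upper X le M = upper Q le M \<inter> X" using XQ unfolding upper_def by auto

lemma X_pwc: "poset_with_compl X le c z u"
proof -
  have "poset_on X le"
    unfolding poset_on_def using XQ refl antisym trans by (meson subsetD)
  moreover have "\<forall>x\<in>X. le z x \<and> le x u" using XQ bot top by blast
  moreover have "\<forall>x\<in>X. \<forall>y\<in>X. le x y \<longrightarrow> le (c y) (c x)" using XQ anti by blast
  moreover have "\<forall>x\<in>X. c (c x) = x" using XQ inv by blast
  moreover have "\<forall>x\<in>X. lower X le {x, c x} = {z} \<and> upper X le {x, c x} = {u}"
    using XQ compl_low compl_up lowX upX zX uX by auto
  ultimately show ?thesis unfolding poset_with_compl_def using zX uX cX by blast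
qed

lemma X_sdc: "strongly_D_continuous X le c z u"
  unfolding strongly_D_continuous_def
proof (intro conjI X_pwc allI impI)
  fix B C assume H: "B \<subseteq> X \<and> C \<subseteq> X \<and> set_le le B C"
  then have BQ: "B \<subseteq> Q" and CQ: "C \<subseteq> Q" using XQ by auto
  obtain b where b: "is_sup Q le B b" using ex_sup[OF BQ] by blast
  obtain d where d: "is_inf Q le C d" using ex_inf[OF CQ] by blast
  note bp = sup_props[OF b] and dp = inf_props[OF d]
  have bQ: "b \<in> Q" and dQ: "d \<in> Q" using bp dp by auto
  have bd: "le b d"
  proof -
    have "\<forall>x\<in>C. le b x"
    proof
      fix x assume x: "x \<in> C"
      then have "x \<in> Q" using CQ by blast
      moreover have "\<forall>m\<in>B. le m x" using H x unfolding set_le_def by blast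
      ultimately show "le b x" using bp by blast
    qed
    then show ?thesis using dp bQ by blast
  qed
  define G where "G = {g \<in> X. g \<in> C \<or> c g \<in> B}"
  have lowG: "w \<in> Q \<Longrightarrow> (\<forall>g\<in>G. le w g) \<longleftrightarrow> le w d \<and> le w (c b)" for w
  proof
    assume w: "w \<in> Q" "\<forall>g\<in>G. le w g"
    have 1: "le w d" using w dp H unfolding G_def by blast
    have "\<forall>x\<in>B. le x (c w)"
    proof
      fix x assume x: "x \<in> B"
      then have "c x \<in> G" using H cX inv BQ unfolding G_def by auto
      then have "le w (c x)" using w by blast
      then show "le x (c w)" using anti_iff2 w(1) x BQ by blast
    qed
    then have "le b (c w)" using bp cQ w(1) by blast
    then show "le w d \<and> le w (c b)" using 1 anti_iff2 w(1) bQ by blast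
  next
    assume w: "w \<in> Q" "le w d \<and> le w (c b)"
    show "\<forall>g\<in>G. le w g"
    proof
      fix g assume g: "g \<in> G"
      then have gQ: "g \<in> Q" using XQ unfolding G_def by auto
      show "le w g"
      proof (cases "g \<in> C")
        case True
        then have "le d g" using dp by blast
        then show ?thesis using w trans[OF _ dQ gQ] by blast
      next
        case False
        then have "c g \<in> B" using g unfolding G_def by auto
        then have "le (c g) b" using bp by blast
        then have "le (c b) g" using anti_iff2 gQ bQ  by (metis cQ inv)
        then show ?thesis using w trans cQ bQ gQ by blast
      qed
    qed
  qed
  have L: "is_inf X le G z \<longleftrightarrow> (\<forall>w\<in>Q. le w d \<and> le w (c b) \<longrightarrow> w = z)"
  proof
    assume i: "is_inf X le G z"
    show "\<forall>w\<in>Q. le w d \<and> le w (c b) \<longrightarrow> w = z"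
    proof (intro ballI impI)
      fix w assume w: "w \<in> Q" "le w d \<and> le w (c b)"
      have "le w z"
      proof (rule dense_le[OF w(1) zQ])
        fix x assume x: "x \<in> X" "le x w"
        have xQ: "x \<in> Q" using x XQ by blast
        have "le x d" using trans[OF xQ w(1) dQ] x w by blast
        moreover have "le x (c b)" using trans[OF xQ w(1) cQ[OF bQ]] x w by blast
        ultimately have "\<forall>g\<in>G. le x g" using lowG[OF xQ] by blast
        then have "x \<in> lower X le G" using x unfolding lower_def by auto
        then show "le x z" using i unfolding is_inf_def by blast
      qed
      then show "w = z" using antisym bot w zQ by blast
    qed
  next
    assume r: "\<forall>w\<in>Q. le w d \<and> le w (c b) \<longrightarrow> w = z"
    show "is_inf X le G z"
      unfolding is_inf_def lower_def
    proof (intro conjI CollectI ballI)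
      show "z \<in> X" by (rule zX)
      show "le z g" if "g \<in> G" for g using that bot XQ unfolding G_def by auto
      fix x assume "x \<in> {x \<in> X. \<forall>m\<in>G. le x m}"
      then have "x \<in> Q" "\<forall>m\<in>G. le x m" using XQ by auto
      then have "x = z" using r lowG by blast
      then show "le x z" using refl zQ by blast
    qed
  qed
  have R: "(\<forall>a\<in>lower X le C. \<forall>b'\<in>upper X le B. le a b') \<longleftrightarrow> le d b"
  proof
    assume r: "\<forall>a\<in>lower X le C. \<forall>b'\<in>upper X le B. le a b'"
    show "le d b"
    proof (rule dense_le[OF dQ bQ])
      fix x assume x: "x \<in> X" "le x d"
      show "le x b"
      proof (rule dense_ge[OF bQ])
        show "x \<in> Q" using x XQ by auto
        fix y assume y: "y \<in> X" "le b y"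
        have xQ: "x \<in> Q" using x XQ by blast
        have yQ: "y \<in> Q" using y XQ by blast
        have "\<forall>g\<in>C. le x g"
        proof
          fix g assume "g \<in> C"
          then show "le x g" using dp x trans[OF xQ dQ, of g] CQ by blast
        qed
        then have "x \<in> lower X le C" using x unfolding lower_def by blast
        moreover have "\<forall>g\<in>B. le g y"
        proof
          fix g assume "g \<in> B"
          then show "le g y" using bp y trans[OF _ bQ yQ, of g] BQ by blast
        qed
        then have "y \<in> upper X le B" using y unfolding upper_def by blast
        ultimately show "le x y" using r by blast
      qed
    qed
  next
    assume db: "le d b"
    show "\<forall>a\<in>lower X le C. \<forall>b'\<in>upper X le B. le a b'"
    proof (intro ballI)
      fix a b' assume a: "a \<in> lower X le C" and b': "b' \<in> upper X le B"
      have aQ: "a \<in> Q" and b'Q: "b' \<in> Q" using a b' XQ unfolding lower_def upper_def by auto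
      have "le a d" using a dp aQ unfolding lower_def by blast
      moreover have "le b b'" using b' bp b'Q unfolding upper_def by blast
      ultimately show "le a b'" using db trans aQ dQ bQ b'Q by meson
    qed
  qed
  show "is_inf X le G z \<longleftrightarrow> (\<forall>a\<in>lower X le C. \<forall>b\<in>upper X le B. le a b)"
    unfolding L R
  proof
    assume r: "\<forall>w\<in>Q. le w d \<and> le w (c b) \<longrightarrow> w = z"
    have s1: "is_sup Q le {d, b} d" using dQ bQ bd refl unfolding is_sup_def upper_def by auto
    have i1: "is_inf Q le {d, c b} z"
      unfolding is_inf_def lower_def
    proof (intro conjI CollectI ballI)
      show "z \<in> Q" by (rule zQ)
      fix m assume "m \<in> {d, c b}"
      then show "le z m" using bot dQ cQ[OF bQ] by blast
    next
      fix x assume x: "x \<in> {x \<in> Q. \<forall>m\<in>{d, c b}. le x m}"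
      then have "x = z" using r by blast
      then show "le x z" using refl zQ by blast
    qed
    have "is_sup Q le {z, b} d" by (rule omlaw[OF dQ bQ s1 i1])
    then show "le d b" using bQ bot refl unfolding is_sup_def upper_def by auto
  next
    assume db: "le d b"
    then have "d = b" using bd antisym dQ bQ by blast
    show "\<forall>w\<in>Q. le w d \<and> le w (c b) \<longrightarrow> w = z"
      using compl_low[OF bQ] \<open>d = b\<close> unfolding lower_def by auto
  qed
qed

lemma X_pom: "pseudo_orthomodular X le c z u"
  unfolding pseudo_orthomodular_def
proof (intro conjI X_pwc ballI)
  fix x y assume x: "x \<in> X" and y: "y \<in> X"
  have xQ: "x \<in> Q" and yQ: "y \<in> Q" using x y XQ by auto
  have cyQ: "c y \<in> Q" using cQ yQ .
  obtain m where m: "is_inf Q le {x, y} m" using ex_inf[of "{x,y}"] xQ yQ by auto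
  note mp = inf_props[OF m]
  have mQ: "m \<in> Q" and mx: "le m x" and my: "le m y" using m unfolding is_inf_def lower_def by simp_all
  obtain s where s: "is_sup Q le {m, c y} s" using ex_sup[of "{m, c y}"] mQ cyQ by auto
  note sp = sup_props[OF s]
  have sQ: "s \<in> Q" and ms: "le m s" and cys: "le (c y) s" using s unfolding is_sup_def upper_def by simp_all
  have cmQ: "c m \<in> Q" using cQ mQ .
  have lowxy: "v \<in> lower X le {x, y} \<longleftrightarrow> le v m" if vX: "v \<in> X" for v
  proof
    have vQ: "v \<in> Q" using vX XQ by blast
    show "v \<in> lower X le {x, y} \<Longrightarrow> le v m" using mp vQ unfolding lower_def by blast
    assume "le v m"
    then have "le v x" "le v y" using mx my trans[OF vQ mQ xQ] trans[OF vQ mQ yQ] by simp_all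
    then show "v \<in> lower X le {x, y}" using vX unfolding lower_def by blast
  qed
  have U1: "w \<in> upper X le (lower X le {x, y} \<union> {c y}) \<longleftrightarrow> w \<in> X \<and> le s w" for w
  proof
    assume w: "w \<in> upper X le (lower X le {x, y} \<union> {c y})"
    then have wX: "w \<in> X" and wQ: "w \<in> Q" using XQ unfolding upper_def by auto
    have "le m w"
      by (rule dense_le[OF mQ wQ]) (use w lowxy in \<open>auto simp: upper_def\<close>)
    moreover have "le (c y) w" using w unfolding upper_def by auto
    ultimately show "w \<in> X \<and> le s w" using sp wQ wX by blast
  next
    assume w: "w \<in> X \<and> le s w"
    then have wQ: "w \<in> Q" using XQ by auto
    have mw: "le m w" using w trans[OF mQ sQ wQ] ms by simp
    have cyw: "le (c y) w" using w trans[OF cyQ sQ wQ] cys by simp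
    have "\<forall>v\<in>lower X le {x, y} \<union> {c y}. le v w"
    proof
      fix v assume "v \<in> lower X le {x, y} \<union> {c y}"
      then consider "v \<in> lower X le {x, y}" | "v = c y" by blast
      then show "le v w"
      proof cases
        case 1
        then have "v \<in> Q" "le v m" using lowxy XQ unfolding lower_def by auto
        then show ?thesis using trans[OF _ mQ wQ] mw by blast
      next
        case 2 then show ?thesis using cyw by simp
      qed
    qed
    then show "w \<in> upper X le (lower X le {x, y} \<union> {c y})"
      using w unfolding upper_def by blast
  qed
  obtain m2 where m2: "is_inf Q le {c m, y} m2" using ex_inf[of "{c m, y}"] cmQ yQ by auto
  note m2p = inf_props[OF m2]
  have m2Q: "m2 \<in> Q" using m2p by blast
  have s1: "is_sup Q le {c m, c y} (c m)"
    using anti[OF mQ yQ my] refl cmQ cyQ unfolding is_sup_def upper_def by auto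
  have i1: "is_inf Q le {c m, c (c y)} m2" using m2 inv yQ by simp
  have oo: "is_sup Q le {m2, c y} (c m)" by (rule omlaw[OF cmQ cyQ s1 i1])
  have key: "v \<in> Q \<Longrightarrow> le v s \<Longrightarrow> le v y \<Longrightarrow> le v m" for v
  proof -
    assume v: "v \<in> Q" "le v s" "le v y"
    have "le m (c m2)" using m2p cmQ anti_iff2 mQ m2Q by blast
    moreover have "le (c y) (c m2)" using m2p anti yQ m2Q by blast
    ultimately have "le s (c m2)" using sp cQ m2Q by blast
    then have "le v (c m2)" using v trans sQ cQ m2Q by blast
    then have "le m2 (c v)" using anti_iff2 v(1) m2Q by blast
    moreover have "le (c y) (c v)" using anti v yQ by blast
    ultimately have "le (c m) (c v)" using sup_props[OF oo] cQ v(1) by blast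
    then show "le v m" using anti_iff v(1) mQ by blast
  qed
  show "lower X le (upper X le (lower X le {x, y} \<union> {c y}) \<union> {y}) = lower X le {x, y}"
  proof (rule set_eqI)
    fix v
    show "v \<in> lower X le (upper X le (lower X le {x, y} \<union> {c y}) \<union> {y}) \<longleftrightarrow> v \<in> lower X le {x, y}"
    proof
      assume v: "v \<in> lower X le (upper X le (lower X le {x, y} \<union> {c y}) \<union> {y})"
      then have vX: "v \<in> X" and vQ: "v \<in> Q" and vy: "le v y" using XQ unfolding lower_def by auto
      have "le v s"
        by (rule dense_ge[OF sQ vQ]) (use v U1 in \<open>auto simp: lower_def\<close>)
      then have "le v m" using key vQ vy by blast
      then show "v \<in> lower X le {x, y}" using lowxy vX by blast
    next
      assume v: "v \<in> lower X le {x, y}"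
      then have vX: "v \<in> X" and vQ: "v \<in> Q" and vm: "le v m" using XQ lowxy unfolding lower_def by auto
      have "le v s" using vm sp trans vQ mQ sQ by blast
      then have "\<forall>w\<in>upper X le (lower X le {x, y} \<union> {c y}). le v w"
        using U1 trans vQ sQ XQ by blast
      then show "v \<in> lower X le (upper X le (lower X le {x, y} \<union> {c y}) \<union> {y})"
        using v vX unfolding lower_def by auto
    qed
  qed
qed

end

theorem theorem10:
  shows "(\<forall>(P :: 'a set) le c z u.
            strongly_D_continuous P le c z u \<and> pseudo_orthomodular P le c z u \<longrightarrow>
            (\<exists>(Q :: 'a set set) leQ cQ zQ uQ X f.
               complete_orthomodular_lattice Q leQ cQ zQ uQ \<and>
               compl_closed_doubly_dense Q leQ cQ zQ uQ X \<and>
               compl_poset_iso f P le c X leQ cQ))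
       \<and> (\<forall>(Q :: 'b set) le c z u X.
            complete_orthomodular_lattice Q le c z u \<and>
            compl_closed_doubly_dense Q le c z u X \<longrightarrow>
            strongly_D_continuous X le c z u \<and> pseudo_orthomodular X le c z u)"
proof (intro conjI allI impI)
  fix P :: "'a set" and le c z u
  assume H: "strongly_D_continuous P le c z u \<and> pseudo_orthomodular P le c z u"
  interpret A: sdcP P le c z u by unfold_locales (use H in blast)
  show "\<exists>(Q :: 'a set set) leQ cQ zQ uQ X f.
               complete_orthomodular_lattice Q leQ cQ zQ uQ \<and>
               compl_closed_doubly_dense Q leQ cQ zQ uQ X \<and>
               compl_poset_iso f P le c X leQ cQ"
    using A.Q_oml A.XX_dd A.ff_iso by blast
next
  fix Q :: "'b set" and le c z u X
  assume H: "complete_orthomodular_lattice Q le c z u \<and> compl_closed_doubly_dense Q le c z u X"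
  interpret B: omlQ Q le c z u X by unfold_locales (use H in blast)+
  show "strongly_D_continuous X le c z u" by (rule B.X_sdc)
  show "pseudo_orthomodular X le c z u" by (rule B.X_pom)
qed

end
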